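(* Let $\mathcal{B}=\{(1,1,2),(1,2,2),(2,1,1)\}$, let $X^{\mathcal{B}}$ be the corresponding $S_2$-SFT and $F$ its SNRE, which is $a_n=a_{n-1}b_{n-1}+b_{n-1}^2$, $b_n=a_{n-1}^2$, $a_1=2$, $b_1=1$. Then $F$ is of the oscillating type, and $$h(X^{\mathcal{B}})=\frac14\lim_{n\to\infty}\Big(\alpha_1+\sum_{j=1}^{n}2^{-2j}\ln r^{(a)}_{2j-1}\Big),$$ where $\alpha_1=\ln a_1$ and $r^{(a)}_m=1+\frac{b_m}{a_m}+\big(\frac{b_m}{a_m}\big)^2$.
   Context: $S_2$ is the free semigroup on two generators, identified with finite words over $\{1,2\}$ (root $\epsilon$); alphabet $\{1,2\}$. For a basic set $\mathcal{B}\subseteq\{1,2\}^3$ of admissible 2-blocks $(i,i_1,i_2)$, $a_n$ (resp. $b_n$) is the number of maps $u$ from words of length $\le n$ to $\{1,2\}$ with $(u(w),u(w1),u(w2))\in\mathcal{B}$ for all words $w$ of length $\le n-1$ and $u(\epsilon)=1$ (resp. $2$); $|B_n(X^{\mathcal{B}})|=a_n+b_n$. The entropy is $h(X^{\mathcal{B}})=\limsup_{n}\frac{\ln(a_n+b_n)}{2^{n+1}-1}$, where $2^{n+1}-1$ is the number of words of length $\le n$; this limsup is known to be a limit. The SNRE is of oscillating type if there are two infinite subsequences $(n^{(a)}_m)$ and $(n^{(b)}_m)$ of $\mathbb{N}$ such that $a_n\ge b_n$ for $n$ in the first and $a_n<b_n$ for $n$ in the second. *)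

theory Defs
  imports "HOL-Analysis.Analysis" "HOL-Library.FuncSet"
begin

text \<open>Words over the alphabet {1,2} (elements of the free semigroup S_2, root = empty word)
  of length at most n.  The word w followed by letter i is w @ [i].\<close>
definition words_le :: "nat \<Rightarrow> nat list set" where
  "words_le n = {w. set w \<subseteq> {1,2} \<and> length w \<le> n}"

definition admissible :: "(nat \<times> nat \<times> nat) set \<Rightarrow> nat \<Rightarrow> (nat list \<Rightarrow> nat) \<Rightarrow> bool" where
  "admissible B n u \<longleftrightarrow>
     (\<forall>w. set w \<subseteq> {1,2} \<and> length w < n \<longrightarrow> (u w, u (w @ [1]), u (w @ [2])) \<in> B)"

definition cnt :: "(nat \<times> nat \<times> nat) set \<Rightarrow> nat \<Rightarrow> nat \<Rightarrow> nat" where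
  "cnt B c n = card {u \<in> words_le n \<rightarrow>\<^sub>E {1,2}. admissible B n u \<and> u [] = c}"

definition seq_a :: "(nat \<times> nat \<times> nat) set \<Rightarrow> nat \<Rightarrow> nat" where
  "seq_a B n = cnt B 1 n"

definition seq_b :: "(nat \<times> nat \<times> nat) set \<Rightarrow> nat \<Rightarrow> nat" where
  "seq_b B n = cnt B 2 n"

definition entropy :: "(nat \<times> nat \<times> nat) set \<Rightarrow> ereal" where
  "entropy B = limsup (\<lambda>n. ereal (ln (real (seq_a B n + seq_b B n)) / (2 ^ (n + 1) - 1)))"

definition oscillating :: "(nat \<Rightarrow> nat) \<Rightarrow> (nat \<Rightarrow> nat) \<Rightarrow> bool" where
  "oscillating a b \<longleftrightarrow> infinite {n. a n \<ge> b n} \<and> infinite {n. a n < b n}"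

definition Bex5 :: "(nat \<times> nat \<times> nat) set" where
  "Bex5 = {(1,1,2), (1,2,2), (2,1,1)}"

end

theory Submission
  imports Defs "HOL-Real_Asymp.Real_Asymp"
begin


definition subt :: "nat \<Rightarrow> nat \<Rightarrow> (nat list \<Rightarrow> nat) \<Rightarrow> nat list \<Rightarrow> nat" where
  "subt i n u = restrict (\<lambda>w. u (i # w)) (words_le n)"

definition joint :: "nat \<Rightarrow> nat \<Rightarrow> (nat list \<Rightarrow> nat) \<times> (nat list \<Rightarrow> nat) \<Rightarrow> nat list \<Rightarrow> nat" where
  "joint c n p = restrict (\<lambda>w. if w = [] then c else if hd w = 1 then fst p (tl w) else snd p (tl w)) (words_le (Suc n))"

definition SS where "SS B c n = {u \<in> words_le n \<rightarrow>\<^sub>E {1,2}. admissible B n u \<and> u [] = c}"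
definition TT where "TT B n = {u \<in> words_le n \<rightarrow>\<^sub>E {1,2}. admissible B n u}"

lemma words_le_Cons[simp]: "x # w \<in> words_le (Suc n) \<longleftrightarrow> x \<in> {1,2} \<and> w \<in> words_le n"
  by (auto simp: words_le_def)

lemma words_le_Nil[simp]: "[] \<in> words_le n"
  by (auto simp: words_le_def)

lemma finite_words_le: "finite (words_le n)"
  unfolding words_le_def by (rule finite_lists_length_le) auto

lemma split_bij:
  assumes c: "c \<in> {1,2}"
  shows "bij_betw (\<lambda>u. (subt 1 n u, subt 2 n u)) (SS B c (Suc n))
           {p. fst p \<in> TT B n \<and> snd p \<in> TT B n \<and> (c, fst p [], snd p []) \<in> B}"
proof (rule bij_betw_byWitness[where f' = "joint c n"])
  show "\<forall>u\<in>SS B c (Suc n). joint c n (subt 1 n u, subt 2 n u) = u"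
  proof
    fix u assume u: "u \<in> SS B c (Suc n)"
    show "joint c n (subt 1 n u, subt 2 n u) = u"
    proof (rule ext)
      fix w
      show "joint c n (subt 1 n u, subt 2 n u) w = u w"
      proof (cases "w \<in> words_le (Suc n)")
        case False
        then show ?thesis using u by (auto simp: joint_def SS_def PiE_def extensional_def)
      next
        case True
        show ?thesis
        proof (cases w)
          case Nil
          then show ?thesis using u by (auto simp: joint_def SS_def)
        next
          case (Cons x w')
          then show ?thesis using True by (auto simp: joint_def subt_def)
        qed
      qed
    qed
  qed
next
  show "\<forall>p\<in>{p. fst p \<in> TT B n \<and> snd p \<in> TT B n \<and> (c, fst p [], snd p []) \<in> B}.
          (subt 1 n (joint c n p), subt 2 n (joint c n p)) = p"
  proof
    fix p assume p: "p \<in> {p. fst p \<in> TT B n \<and> snd p \<in> TT B n \<and> (c, fst p [], snd p []) \<in> B}"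
    obtain v1 v2 where pv: "p = (v1, v2)" by (cases p)
    have v1: "v1 \<in> extensional (words_le n)" and v2: "v2 \<in> extensional (words_le n)"
      using p pv by (auto simp: TT_def PiE_def)
    have "subt 1 n (joint c n p) = v1"
    proof (rule ext)
      fix w show "subt 1 n (joint c n p) w = v1 w"
        using v1 by (auto simp: subt_def joint_def pv extensional_def)
    qed
    moreover have "subt 2 n (joint c n p) = v2"
    proof (rule ext)
      fix w show "subt 2 n (joint c n p) w = v2 w"
        using v2 by (auto simp: subt_def joint_def pv extensional_def)
    qed
    ultimately show "(subt 1 n (joint c n p), subt 2 n (joint c n p)) = p" using pv by simp
  qed
next
  show "(\<lambda>u. (subt 1 n u, subt 2 n u)) ` SS B c (Suc n)
     \<subseteq> {p. fst p \<in> TT B n \<and> snd p \<in> TT B n \<and> (c, fst p [], snd p []) \<in> B}"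
  proof
    fix q assume "q \<in> (\<lambda>u. (subt 1 n u, subt 2 n u)) ` SS B c (Suc n)"
    then obtain u where u: "u \<in> SS B c (Suc n)" and q: "q = (subt 1 n u, subt 2 n u)" by auto
    have uP: "\<And>w. w \<in> words_le (Suc n) \<Longrightarrow> u w \<in> {1,2}" using u by (auto simp: SS_def)
    have uA: "\<And>w. set w \<subseteq> {1,2} \<Longrightarrow> length w < Suc n \<Longrightarrow> (u w, u (w @ [1]), u (w @ [2])) \<in> B"
      using u by (auto simp: SS_def admissible_def)
    have sub: "subt i n u \<in> TT B n" if i: "i \<in> {1,2}" for i
    proof -
      have "subt i n u \<in> words_le n \<rightarrow>\<^sub>E {1,2}"
        using uP i by (auto simp: subt_def)
      moreover have "admissible B n (subt i n u)"
        unfolding admissible_def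
      proof (intro allI impI)
        fix w :: "nat list" assume w: "set w \<subseteq> {1,2} \<and> length w < n"
        have m: "w \<in> words_le n" "w @ [1] \<in> words_le n" "w @ [2] \<in> words_le n"
          using w by (auto simp: words_le_def)
        have "(u (i # w), u ((i # w) @ [1]), u ((i # w) @ [2])) \<in> B"
          using w i by (intro uA) auto
        then show "(subt i n u w, subt i n u (w @ [1]), subt i n u (w @ [2])) \<in> B"
          using m by (simp add: subt_def)
      qed
      ultimately show ?thesis by (simp add: TT_def)
    qed
    have "(u [], u [1], u [2]) \<in> B" using uA[of "[]"] by simp
    moreover have "u [] = c" using u by (simp add: SS_def)
    ultimately show "q \<in> {p. fst p \<in> TT B n \<and> snd p \<in> TT B n \<and> (c, fst p [], snd p []) \<in> B}"
      using sub q by (simp add: subt_def)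
  qed
next
  show "joint c n ` {p. fst p \<in> TT B n \<and> snd p \<in> TT B n \<and> (c, fst p [], snd p []) \<in> B}
     \<subseteq> SS B c (Suc n)"
  proof
    fix u assume "u \<in> joint c n ` {p. fst p \<in> TT B n \<and> snd p \<in> TT B n \<and> (c, fst p [], snd p []) \<in> B}"
    then obtain v1 v2 where v1: "v1 \<in> TT B n" and v2: "v2 \<in> TT B n" and cB: "(c, v1 [], v2 []) \<in> B"
      and u: "u = joint c n (v1, v2)" by auto
    have v1P: "\<And>w. w \<in> words_le n \<Longrightarrow> v1 w \<in> {1,2}" using v1 by (auto simp: TT_def)
    have v2P: "\<And>w. w \<in> words_le n \<Longrightarrow> v2 w \<in> {1,2}" using v2 by (auto simp: TT_def)
    have v1A: "\<And>w. set w \<subseteq> {1,2} \<Longrightarrow> length w < n \<Longrightarrow> (v1 w, v1 (w @ [1]), v1 (w @ [2])) \<in> B"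
      using v1 by (auto simp: TT_def admissible_def)
    have v2A: "\<And>w. set w \<subseteq> {1,2} \<Longrightarrow> length w < n \<Longrightarrow> (v2 w, v2 (w @ [1]), v2 (w @ [2])) \<in> B"
      using v2 by (auto simp: TT_def admissible_def)
    have "u \<in> words_le (Suc n) \<rightarrow>\<^sub>E {1,2}"
    proof
      fix w assume w: "w \<in> words_le (Suc n)"
      show "u w \<in> {1,2}"
      proof (cases w)
        case Nil then show ?thesis using c by (simp add: u joint_def)
      next
        case (Cons x w')
        then have "x \<in> {1,2}" "w' \<in> words_le n" using w by auto
        then show ?thesis using Cons w v1P v2P by (auto simp: u joint_def)
      qed
    next
      fix w assume "w \<notin> words_le (Suc n)" then show "u w = undefined" by (simp add: u joint_def)
    qed
    moreover have "admissible B (Suc n) u"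
      unfolding admissible_def
    proof (intro allI impI)
      fix w :: "nat list" assume w: "set w \<subseteq> {1,2} \<and> length w < Suc n"
      show "(u w, u (w @ [1]), u (w @ [2])) \<in> B"
      proof (cases w)
        case Nil
        have "[1] \<in> words_le (Suc n)" "[2] \<in> words_le (Suc n)" by (auto simp: words_le_def)
        then show ?thesis using Nil cB by (simp add: u joint_def)
      next
        case (Cons x w')
        have x: "x \<in> {1,2}" and w': "set w' \<subseteq> {1,2}" "length w' < n" using w Cons by auto
        have m: "w \<in> words_le (Suc n)" "w @ [1] \<in> words_le (Suc n)" "w @ [2] \<in> words_le (Suc n)"
          using w by (auto simp: words_le_def)
        show ?thesis
        proof (cases "x = 1")
          case True
          then show ?thesis using m Cons v1A[OF w'] by (simp add: u joint_def)
        next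
          case False
          then show ?thesis using m Cons v2A[OF w'] by (simp add: u joint_def)
        qed
      qed
    qed
    moreover have "u [] = c" by (simp add: u joint_def)
    ultimately show "u \<in> SS B c (Suc n)" by (simp add: SS_def)
  qed
qed



lemma finite_TT: "finite (TT B n)"
proof -
  have "finite (words_le n \<rightarrow>\<^sub>E {1,2::nat})" by (intro finite_PiE finite_words_le) auto
  then show ?thesis unfolding TT_def by (rule finite_subset[rotated]) auto
qed

lemma finite_SS: "finite (SS B c n)"
  by (rule finite_subset[OF _ finite_TT[of B n]]) (auto simp: SS_def TT_def)

lemma TT_split: "TT B n = SS B 1 n \<union> SS B 2 n"
  by (auto simp: TT_def SS_def dest: PiE_mem[of _ _ _ "[]"])

lemma card_TT: "card (TT B n) = card (SS B 1 n) + card (SS B 2 n)"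
  unfolding TT_split by (rule card_Un_disjoint[OF finite_SS finite_SS]) (auto simp: SS_def)

lemma TT_root: "u \<in> TT B n \<Longrightarrow> u [] \<in> {1,2}"
  by (auto simp: TT_def dest: PiE_mem[of _ _ _ "[]"])

lemma card_SS_Suc:
  assumes "c \<in> {1,2}"
  shows "card (SS B c (Suc n)) = card {p. fst p \<in> TT B n \<and> snd p \<in> TT B n \<and> (c, fst p [], snd p []) \<in> B}"
  using bij_betw_same_card[OF split_bij[OF assms]] .

lemma a_Suc: "card (SS Bex5 1 (Suc n)) = (card (SS Bex5 1 n) + card (SS Bex5 2 n)) * card (SS Bex5 2 n)"
proof -
  have "{p. fst p \<in> TT Bex5 n \<and> snd p \<in> TT Bex5 n \<and> (1, fst p [], snd p []) \<in> Bex5} = TT Bex5 n \<times> SS Bex5 2 n"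
    using TT_root[of _ Bex5 n] by (auto simp: Bex5_def SS_def TT_def)
  then show ?thesis using card_SS_Suc[of 1 Bex5 n] by (simp add: card_cartesian_product card_TT)
qed

lemma b_Suc: "card (SS Bex5 2 (Suc n)) = card (SS Bex5 1 n) * card (SS Bex5 1 n)"
proof -
  have "{p. fst p \<in> TT Bex5 n \<and> snd p \<in> TT Bex5 n \<and> (2, fst p [], snd p []) \<in> Bex5} = SS Bex5 1 n \<times> SS Bex5 1 n"
    by (auto simp: Bex5_def SS_def TT_def)
  then show ?thesis using card_SS_Suc[of 2 Bex5 n] by (simp add: card_cartesian_product)
qed

lemma SS_0: "SS B c 0 = {(\<lambda>w. undefined)([] := c)}" if "c \<in> {1,2}"
proof -
  have "words_le 0 = {[]}" by (auto simp: words_le_def)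
  show ?thesis
  proof (intro equalityI subsetI)
    fix u :: "nat list \<Rightarrow> nat" assume u: "u \<in> SS B c 0"
    show "u \<in> {(\<lambda>w. undefined)([] := c)}"
    proof -
      have "u = (\<lambda>w. undefined)([] := c)"
      proof (rule ext)
        fix w show "u w = ((\<lambda>w. undefined)([] := c)) w"
          using u \<open>words_le 0 = {[]}\<close> by (cases "w = []") (auto simp: SS_def PiE_def extensional_def)
      qed
      then show ?thesis by simp
    qed
  next
    fix u :: "nat list \<Rightarrow> nat" assume "u \<in> {(\<lambda>w. undefined)([] := c)}"
    then show "u \<in> SS B c 0" using that \<open>words_le 0 = {[]}\<close> by (auto simp: SS_def admissible_def PiE_def extensional_def)
  qed
qed

lemma card_SS_0: "c \<in> {1,2} \<Longrightarrow> card (SS B c 0) = 1"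
  by (simp add: SS_0)

lemma seq_a_eq: "seq_a B n = card (SS B 1 n)" by (simp add: seq_a_def cnt_def SS_def)
lemma seq_b_eq: "seq_b B n = card (SS B 2 n)" by (simp add: seq_b_def cnt_def SS_def)

lemma rec_a: "seq_a Bex5 (Suc n) = (seq_a Bex5 n + seq_b Bex5 n) * seq_b Bex5 n"
  unfolding seq_a_eq seq_b_eq by (rule a_Suc)
lemma rec_b: "seq_b Bex5 (Suc n) = seq_a Bex5 n ^ 2"
  unfolding seq_a_eq seq_b_eq power2_eq_square by (rule b_Suc)
lemma seq_a0: "seq_a Bex5 0 = 1" by (simp add: seq_a_eq card_SS_0)
lemma seq_b0: "seq_b Bex5 0 = 1" by (simp add: seq_b_eq card_SS_0)



lemma t1: "(\<lambda>k::nat. (4::real)^k / (4*4^k - 1)) \<longlonglongrightarrow> 1/4" by real_asymp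
lemma t2: "(\<lambda>k::nat. (2::real)*4^k / (8*4^k - 1)) \<longlonglongrightarrow> 1/4" by real_asymp
lemma t3: "(\<lambda>k::nat. 1 / (4*(4::real)^k - 1)) \<longlonglongrightarrow> 0" by real_asymp
lemma t4: "(\<lambda>k::nat. 1 / (8*(4::real)^k - 1)) \<longlonglongrightarrow> 0" by real_asymp


lemma L1: assumes "2*b \<le> (a::nat)" shows "4*((a+b)*b) \<le> 3*a^2"
proof -
  have h1: "(2*b)*(2*a) \<le> a*(2*a)" using assms by (rule mult_le_mono1)
  have h2: "(2*b)*(2*b) \<le> a*a" using assms by (intro mult_le_mono) auto
  have "4*((a+b)*b) = (2*b)*(2*a) + (2*b)*(2*b)" by (simp add: algebra_simps)
  also have "\<dots> \<le> a*(2*a) + a*a" using h1 h2 by linarith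
  also have "\<dots> = 3*a^2" by (simp add: algebra_simps power2_eq_square)
  finally show ?thesis .
qed

lemma L2: assumes "4*a \<le> 3*(b::nat)" shows "2*a^2 \<le> (a+b)*b"
proof -
  have ab: "a \<le> b" using assms by linarith
  have h1: "a*a \<le> a*b" using ab by simp
  have h2: "a*a \<le> b*b" using ab by (intro mult_le_mono) auto
  have "2*a^2 = a*a + a*a" by (simp add: power2_eq_square)
  also have "\<dots> \<le> a*b + b*b" using h1 h2 by linarith
  also have "\<dots> = (a+b)*b" by (simp add: algebra_simps)
  finally show ?thesis .
qed

lemma geom_sum: "(\<Sum>j=1..k. (1/4::real)^j) = (1 - (1/4)^k)/3"
proof (induction k)
  case 0 then show ?case by simp
next
  case (Suc k)
  have "(\<Sum>j=1..Suc k. (1/4::real)^j) = (\<Sum>j=1..k. (1/4)^j) + (1/4)^Suc k" by simp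
  also have "\<dots> = (1-(1/4)^k)/3 + 1/4*(1/4::real)^k" using Suc by simp
  also have "\<dots> = (1-(1/4)^Suc k)/3"
  proof -
    have g: "\<And>x::real. (1-x)/3 + 1/4*x = (1-1/4*x)/3" by (simp add: field_simps)
    show ?thesis unfolding power_Suc by (rule g)
  qed
  finally show ?case .
qed

lemma powr_m2: "2 powr (- 2 * real j) = (1/4::real)^j"
proof -
  have h: "(2::real) powr (real (2*j)) = 2^(2*j)" by (rule powr_realpow) simp
  have "- 2 * real j = - real (2*j)" by simp
  then have "2 powr (- 2 * real j) = inverse (2 powr real (2*j))"
    by (metis powr_minus)
  also have "\<dots> = inverse ((2::real)^(2*j))" by (simp only: h)
  also have "(2::real)^(2*j) = 4^j" by (simp add: power_mult)
  finally show ?thesis by (simp add: power_one_over inverse_eq_divide)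
qed

lemma seq_even_odd:
  assumes E: "(\<lambda>n. f (2 * n)) \<longlonglongrightarrow> (l :: real)"
      and O: "(\<lambda>n. f (2 * n + 1)) \<longlonglongrightarrow> l"
  shows "f \<longlonglongrightarrow> l"
proof (rule LIMSEQ_I)
  fix e :: real assume e: "e > 0"
  obtain n1 where n1: "\<And>n. n \<ge> n1 \<Longrightarrow> norm (f (2*n) - l) < e" using LIMSEQ_D[OF E e] by blast
  obtain n2 where n2: "\<And>n. n \<ge> n2 \<Longrightarrow> norm (f (2*n+1) - l) < e" using LIMSEQ_D[OF O e] by blast
  show "\<exists>no. \<forall>n\<ge>no. norm (f n - l) < e"
  proof (intro exI allI impI)
    fix n assume n: "2*n1 + 2*n2 \<le> n"
    show "norm (f n - l) < e"
    proof (cases "even n")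
      case True then obtain m where "n = 2*m" by blast
      then show ?thesis using n n1[of m] by auto
    next
      case False then obtain m where "n = 2*m+1" using oddE by blast
      then show ?thesis using n n2[of m] by auto
    qed
  qed
qed

locale snre =
  fixes a b :: "nat \<Rightarrow> nat"
  assumes a0: "a 0 = 1" and b0: "b 0 = 1"
    and ra: "\<And>n. a (Suc n) = (a n + b n) * b n"
    and rb: "\<And>n. b (Suc n) = a n ^ 2"
begin

lemma pos: "a n > 0 \<and> b n > 0"
  by (induction n) (auto simp: a0 b0 ra rb)

lemma apos: "a n > 0" and bpos: "b n > 0" using pos by auto

lemma osc_ineq: "2 * b (2*k+1) \<le> a (2*k+1) \<and> 4 * a (2*k+2) \<le> 3 * b (2*k+2)"
proof (induction k)
  case 0
  show ?case by (simp add: numeral_2_eq_2 a0 b0 ra rb)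
next
  case (Suc k)
  have e: "4 * a (2*k+2) \<le> 3 * b (2*k+2)" using Suc by blast
  have "2 * b (2*k+3) \<le> a (2*k+3)"
    using L2[OF e] by (simp add: numeral_3_eq_3 ra rb eval_nat_numeral)
  moreover have "4 * a (2*k+4) \<le> 3 * b (2*k+4)"
    using L1[OF calculation] by (simp add: ra rb eval_nat_numeral)
  ultimately show ?case by (simp add: eval_nat_numeral)
qed

lemma oscillating: "oscillating a b"
proof -
  have "range (\<lambda>k. 2*k+1) \<subseteq> {n. a n \<ge> b n}"
  proof
    fix n :: nat assume "n \<in> range (\<lambda>k. 2*k+1)"
    then obtain k where k: "n = 2*k+1" by auto
    have "2 * b n \<le> a n" using osc_ineq k by blast
    then show "n \<in> {n. a n \<ge> b n}" by auto
  qed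
  moreover have "infinite (range (\<lambda>k::nat. 2*k+1))" by (rule range_inj_infinite) (auto simp: inj_on_def)
  moreover have "range (\<lambda>k. 2*k+2) \<subseteq> {n. a n < b n}"
  proof
    fix n :: nat assume "n \<in> range (\<lambda>k. 2*k+2)"
    then obtain k where k: "n = 2*k+2" by auto
    have "4 * a n \<le> 3 * b n" using osc_ineq k by blast
    then show "n \<in> {n. a n < b n}" using apos[of n] by auto
  qed
  moreover have "infinite (range (\<lambda>k::nat. 2*k+2))" by (rule range_inj_infinite) (auto simp: inj_on_def)
  ultimately show ?thesis unfolding oscillating_def by (meson infinite_super)
qed

definition Q where "Q m = a m ^ 2 + a m * b m + b m ^ 2"
definition r :: "nat \<Rightarrow> real" where "r m = 1 + real (b m) / real (a m) + (real (b m) / real (a m)) ^ 2"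

lemma r_Q: "r m = real (Q m) / real (a m) ^ 2"
  using apos[of m] by (simp add: r_def Q_def field_simps power2_eq_square)

lemma a_SS: "a (Suc (Suc m)) = a m ^ 2 * Q m"
  by (simp add: ra rb Q_def algebra_simps power2_eq_square)

lemma ab_S: "a (Suc m) + b (Suc m) = Q m"
  by (simp add: ra rb Q_def algebra_simps power2_eq_square)

lemma r_ge1: "r m \<ge> 1" by (simp add: r_def)

lemma r_odd: "r (2*k+1) \<le> 7/4"
proof -
  let ?x = "real (b (2*k+1)) / real (a (2*k+1))"
  have "2 * real (b (2*k+1)) \<le> real (a (2*k+1))" using osc_ineq[of k] by (metis of_nat_le_iff of_nat_mult of_nat_numeral)
  then have x: "?x \<le> 1/2" using apos[of "2*k+1"] by (simp add: field_simps)
  have x0: "?x \<ge> 0" by simp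
  have x2: "?x^2 \<le> (1/2)^2" using x x0 by (rule power_mono)
  show ?thesis using x x2 unfolding r_def power2_eq_square by linarith
qed

lemma lnr_odd: "0 \<le> ln (r (2*k+1)) \<and> ln (r (2*k+1)) \<le> 1"
proof -
  have "ln (r (2*k+1)) \<le> r (2*k+1) - 1" using r_ge1 by (intro ln_le_minus_one) (smt (verit))
  then show ?thesis using r_odd[of k] r_ge1[of "2*k+1"] by auto
qed

lemma ln_a_step: "ln (real (a (Suc (Suc m)))) = 4 * ln (real (a m)) + ln (r m)"
proof -
  have am: "real (a m) > 0" using apos by simp
  have "real (a (Suc (Suc m))) = real (a m) ^ 4 * r m"
    using am by (simp add: a_SS r_Q field_simps power2_eq_square eval_nat_numeral)
  moreover have "r m > 0" using r_ge1[of m] by simp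
  ultimately show ?thesis using am by (simp add: ln_mult ln_realpow)
qed

definition S :: "nat \<Rightarrow> real" where
  "S n = ln (real (a 1)) + (\<Sum>j=1..n. 2 powr (- 2 * real j) * ln (r (2 * j - 1)))"

lemma S_eq: "ln (real (a (2*k+1))) = 4^k * S k"
proof (induction k)
  case 0 then show ?case by (simp add: S_def)
next
  case (Suc k)
  have "ln (real (a (2*Suc k+1))) = 4 * ln (real (a (2*k+1))) + ln (r (2*k+1))"
    using ln_a_step[of "2*k+1"] by simp
  also have "\<dots> = 4^(Suc k) * (S k + (1/4)^(Suc k) * ln (r (2*k+1)))"
    using Suc by (simp add: field_simps power_divide)
  also have "S k + (1/4)^(Suc k) * ln (r (2*k+1)) = S (Suc k)"
  proof -
    have "S (Suc k) = S k + 2 powr (- 2 * real (Suc k)) * ln (r (2 * Suc k - 1))"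
      unfolding S_def by simp
    also have "2 * Suc k - 1 = 2*k+1" by simp
    finally show ?thesis unfolding powr_m2 by simp
  qed
  finally show ?case .
qed

lemma S_inc: "incseq S"
proof (rule incseq_SucI)
  fix n
  have "0 \<le> ln (r (2*n+1))" using lnr_odd by blast
  then show "S n \<le> S (Suc n)" by (simp add: S_def)
qed

lemma S_bdd: "S n \<le> ln 2 + 1/3"
proof -
  have "(\<Sum>j=1..n. 2 powr (- 2 * real j) * ln (r (2 * j - 1))) \<le> (\<Sum>j=1..n. (1/4::real)^j)"
  proof (rule sum_mono)
    fix j assume j: "j \<in> {1..n}"
    have k: "2*j - 1 = 2*(j-1)+1" using j by auto
    have "ln (r (2*j-1)) \<le> 1" using lnr_odd[of "j-1"] k by simp
    then show "2 powr (- 2 * real j) * ln (r (2 * j - 1)) \<le> (1/4)^j"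
      unfolding powr_m2 by (simp add: mult_left_le)
  qed
  also have "\<dots> \<le> 1/3" unfolding geom_sum by simp
  finally show ?thesis by (simp add: S_def a0 b0 ra)
qed

lemma S_conv: "\<exists>L. S \<longlonglongrightarrow> L"
  using LIMSEQ_incseq_SUP[OF _ S_inc] S_bdd by (meson bdd_aboveI2)

definition f :: "nat \<Rightarrow> real" where
  "f n = ln (real (a n + b n)) / (2 ^ (n + 1) - 1)"

lemma f_odd: "f (2*k+1) = S k * (4^k / (4*4^k - 1)) + ln (1 + real (b (2*k+1)) / real (a (2*k+1))) / (4*4^k - 1)"
proof -
  let ?m = "2*k+1"
  have am: "real (a ?m) > 0" using apos by simp
  have "real (a ?m + b ?m) = real (a ?m) * (1 + real (b ?m) / real (a ?m))"
    using am by (simp add: field_simps)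
  moreover have "1 + real (b ?m) / real (a ?m) > 0" by (simp add: add_pos_nonneg)
  ultimately have "ln (real (a ?m + b ?m)) = ln (real (a ?m)) + ln (1 + real (b ?m) / real (a ?m))"
    using am by (simp only: ln_mult_pos)
  moreover have "(2::real) ^ (?m + 1) = 4*4^k"
  proof -
    have "(2::real)^(2*k) = 4^k" by (simp add: power_mult)
    moreover have "(2::real) ^ (?m + 1) = 2^(2*k) * 4" by (simp add: power_add)
    ultimately show ?thesis by simp
  qed
  ultimately show ?thesis unfolding f_def S_eq by (simp add: add_divide_distrib ac_simps)
qed

lemma f_even: "f (2*k+2) = S k * (2*4^k / (8*4^k - 1)) + ln (r (2*k+1)) / (8*4^k - 1)"
proof -
  let ?m = "2*k+1"
  have am: "real (a ?m) > 0" using apos by simp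
  have "a (2*k+2) + b (2*k+2) = Q ?m" using ab_S[of ?m] by simp
  then have "real (a (2*k+2) + b (2*k+2)) = real (a ?m)^2 * r ?m"
    using am by (simp add: r_Q)
  then have "ln (real (a (2*k+2) + b (2*k+2))) = 2 * ln (real (a ?m)) + ln (r ?m)"
    using am r_ge1[of ?m] by (simp add: ln_mult ln_realpow)
  moreover have "(2::real) ^ (2*k+2 + 1) = 8*4^k"
  proof -
    have "(2::real)^(2*k) = 4^k" by (simp add: power_mult)
    moreover have "(2::real) ^ (2*k+2 + 1) = 2^(2*k) * 8" by (simp add: power_add)
    ultimately show ?thesis by simp
  qed
  ultimately show ?thesis unfolding f_def S_eq by (simp add: add_divide_distrib ac_simps)
qed

lemma f_lim:
  assumes L: "S \<longlonglongrightarrow> L"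
  shows "f \<longlonglongrightarrow> L/4"
proof (rule seq_even_odd)
  have e1: "(\<lambda>k. ln (1 + real (b (2*k+1)) / real (a (2*k+1))) / (4*4^k - 1)) \<longlonglongrightarrow> (0::real)"
  proof (rule tendsto_sandwich[OF _ _ tendsto_const t3])
    show "\<forall>\<^sub>F k in sequentially. 0 \<le> ln (1 + real (b (2*k+1)) / real (a (2*k+1))) / (4*4^k - 1)"
    proof (rule always_eventually, rule allI)
      fix k :: nat
      have "(1::real) \<le> 4^k" by simp
      moreover have "0 \<le> ln (1 + real (b (2*k+1)) / real (a (2*k+1)))" by (rule ln_ge_zero) simp
      ultimately show "0 \<le> ln (1 + real (b (2*k+1)) / real (a (2*k+1))) / (4*4^k - 1)"
        by (intro divide_nonneg_nonneg; linarith)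
    qed
    show "\<forall>\<^sub>F k in sequentially. ln (1 + real (b (2*k+1)) / real (a (2*k+1))) / (4*4^k - 1) \<le> 1 / (4*4^k - 1)"
    proof (rule always_eventually, rule allI)
      fix k :: nat
      let ?x = "real (b (2*k+1)) / real (a (2*k+1))"
      have "2 * real (b (2*k+1)) \<le> real (a (2*k+1))" using osc_ineq[of k] by (metis of_nat_le_iff of_nat_mult of_nat_numeral)
      then have x: "?x \<le> 1/2" using apos[of "2*k+1"] by (simp add: field_simps)
      have "ln (1 + ?x) \<le> ?x" by (rule ln_add_one_self_le_self) simp
      then have l: "ln (1 + ?x) \<le> 1" using x by linarith
      have "(1::real) \<le> 4^k" by simp
      then show "ln (1 + ?x) / (4*4^k - 1) \<le> 1 / (4*4^k - 1)" using l by (intro divide_right_mono; linarith)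
    qed
  qed
  have "(\<lambda>k. S k * (4^k / (4*4^k - 1)) + ln (1 + real (b (2*k+1)) / real (a (2*k+1))) / (4*4^k - 1)) \<longlonglongrightarrow> L * (1/4) + 0"
    by (intro tendsto_add tendsto_mult L t1 e1)
  then show "(\<lambda>k. f (2*k+1)) \<longlonglongrightarrow> L/4" unfolding f_odd by simp
next
  have e2: "(\<lambda>k. ln (r (2*k+1)) / (8*4^k - 1)) \<longlonglongrightarrow> (0::real)"
  proof (rule tendsto_sandwich[OF _ _ tendsto_const t4])
    show "\<forall>\<^sub>F k in sequentially. 0 \<le> ln (r (2*k+1)) / (8*4^k - 1)"
    proof (rule always_eventually, rule allI)
      fix k :: nat
      have "(1::real) \<le> 4^k" by simp
      then show "0 \<le> ln (r (2*k+1)) / (8*4^k - 1)" using lnr_odd[of k] by (intro divide_nonneg_nonneg; linarith)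
    qed
    show "\<forall>\<^sub>F k in sequentially. ln (r (2*k+1)) / (8*4^k - 1) \<le> 1 / (8*4^k - 1)"
    proof (rule always_eventually, rule allI)
      fix k :: nat
      have "(1::real) \<le> 4^k" by simp
      then show "ln (r (2*k+1)) / (8*4^k - 1) \<le> 1 / (8*4^k - 1)" using lnr_odd[of k] by (intro divide_right_mono; linarith)
    qed
  qed
  have "(\<lambda>k. S k * (2*4^k / (8*4^k - 1)) + ln (r (2*k+1)) / (8*4^k - 1)) \<longlonglongrightarrow> L * (1/4) + 0"
    by (intro tendsto_add tendsto_mult L t2 e2)
  then have "(\<lambda>k. f (2*k+2)) \<longlonglongrightarrow> L/4" unfolding f_even by simp
  then have "(\<lambda>k. f (2*(Suc k))) \<longlonglongrightarrow> L/4" by simp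
  then show "(\<lambda>k. f (2*k)) \<longlonglongrightarrow> L/4" by (rule LIMSEQ_imp_Suc)
qed

end


theorem proposition5:
  fixes a b :: "nat \<Rightarrow> nat" and r :: "nat \<Rightarrow> real"
  defines "a \<equiv> seq_a Bex5" and "b \<equiv> seq_b Bex5"
  defines "r \<equiv> (\<lambda>m. 1 + real (b m) / real (a m) + (real (b m) / real (a m)) ^ 2)"
  shows "(a 1 = 2 \<and> b 1 = 1 \<and>
          (\<forall>n\<ge>2. a n = a (n - 1) * b (n - 1) + b (n - 1) ^ 2 \<and> b n = a (n - 1) ^ 2)) \<and>
         oscillating a b \<and>
         (\<exists>L. (\<lambda>n. ln (real (a 1)) + (\<Sum>j=1..n. 2 powr (- 2 * real j) * ln (r (2 * j - 1))))
                 \<longlonglongrightarrow> L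
            \<and> entropy Bex5 = ereal (L / 4))"
proof -
  have A0: "a 0 = 1" and B0: "b 0 = 1" unfolding a_def b_def by (rule seq_a0, rule seq_b0)
  have RA: "\<And>n. a (Suc n) = (a n + b n) * b n" unfolding a_def b_def by (rule rec_a)
  have RB: "\<And>n. b (Suc n) = a n ^ 2" unfolding a_def b_def by (rule rec_b)
  interpret X: snre a b by unfold_locales (rule A0, rule B0, rule RA, rule RB)
  have P1: "a 1 = 2 \<and> b 1 = 1 \<and>
          (\<forall>n\<ge>2. a n = a (n - 1) * b (n - 1) + b (n - 1) ^ 2 \<and> b n = a (n - 1) ^ 2)"
  proof (intro conjI allI impI)
    show "a 1 = 2" using RA[of 0] A0 B0 by simp
    show "b 1 = 1" using RB[of 0] A0 by simp
  next
    fix n :: nat assume n: "2 \<le> n"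
    then have ns: "n = Suc (n - 1)" by simp
    show "a n = a (n - 1) * b (n - 1) + b (n - 1) ^ 2"
      by (subst ns, subst RA) (simp add: algebra_simps power2_eq_square)
    show "b n = a (n - 1) ^ 2" by (subst ns, subst RB) simp
  qed
  have rr: "r = X.r" unfolding r_def X.r_def by simp
  have SS: "(\<lambda>n. ln (real (a 1)) + (\<Sum>j=1..n. 2 powr (- 2 * real j) * ln (r (2 * j - 1)))) = X.S"
    unfolding rr X.S_def by simp
  obtain L where L: "X.S \<longlonglongrightarrow> L" using X.S_conv by blast
  have fl: "X.f \<longlonglongrightarrow> L/4" using X.f_lim[OF L] .
  have fe: "(\<lambda>n. ereal (X.f n)) = (\<lambda>n. ereal (ln (real (a n + b n)) / (2 ^ (n + 1) - 1)))"
    by (simp add: X.f_def)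
  have "entropy Bex5 = limsup (\<lambda>n. ereal (X.f n))"
    unfolding fe unfolding entropy_def a_def b_def ..
  also have "\<dots> = ereal (L/4)"
    by (rule lim_imp_Limsup) (simp_all add: fl)
  finally have "entropy Bex5 = ereal (L/4)" .
  then show ?thesis using P1 X.oscillating L SS by auto
qed

end
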